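(* Let $f_1,f_2,\ldots$ be a sequence of complex polynomials converging uniformly on every compact subset of $\mathbb{C}$ to a polynomial $f\in\mathbb{C}[X]$ which has no double roots. Then there exist $m_0$ and $\rho^{(0)}\in\mathbb{C}$ such that $\rho^{(0)}$ satisfies the converging initial condition for $f_m$ for every $m>m_0$.
   Context: A complex number $\zeta$ satisfies the converging initial condition for a polynomial $g$ if: (1) there is an open convex set $D\subseteq\mathbb{C}$ with $\zeta\in D$ and a real $L>0$ such that $|g'(z_1)-g'(z_2)|\le L|z_1-z_2|$ for all $z_1,z_2\in D$; (2) $g'(\zeta)\ne0$ and there are reals $a,b$ with $|g'(\zeta)^{-1}|\le a$, $|g'(\zeta)^{-1}g(\zeta)|\le b$ and $h=abL\le\frac12$; (3) the closed disc $\overline U=\{z\in\mathbb{C}:|z-\zeta|\le t^*\}$ with $t^*=(1-\sqrt{1-2h})/(aL)$ is contained in $D$. *)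

theory Defs
  imports "HOL-Analysis.Analysis" "HOL-Computational_Algebra.Polynomial"
begin

text \<open>Converging initial condition (Kantorovich-type condition for Newton's method)
  of a point zeta for a complex polynomial g; g' is the formal derivative pderiv g.\<close>
definition converging_initial_condition :: "complex poly \<Rightarrow> complex \<Rightarrow> bool" where
  "converging_initial_condition g \<zeta> \<longleftrightarrow>
    (\<exists>D L a b h tstar.
       open D \<and> convex D \<and> \<zeta> \<in> D \<and> (L::real) > 0 \<and>
       (\<forall>z1\<in>D. \<forall>z2\<in>D. cmod (poly (pderiv g) z1 - poly (pderiv g) z2) \<le> L * cmod (z1 - z2)) \<and>
       poly (pderiv g) \<zeta> \<noteq> 0 \<and>
       cmod (inverse (poly (pderiv g) \<zeta>)) \<le> (a::real) \<and>
       cmod (inverse (poly (pderiv g) \<zeta>) * poly g \<zeta>) \<le> (b::real) \<and>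
       h = a * b * L \<and> h \<le> 1/2 \<and>
       tstar = (1 - sqrt (1 - 2 * h)) / (a * L) \<and>
       cball \<zeta> tstar \<subseteq> D)"

end

theory Submission
  imports Defs "HOL-Complex_Analysis.Complex_Analysis"
begin

lemma deriv_poly_fun: "deriv (\<lambda>z. poly p z) = (\<lambda>z. poly (pderiv p) z)"
  by (rule ext, rule DERIV_imp_deriv, simp)

lemma second_deriv_bound:
  fixes p :: "complex poly"
  assumes "\<And>z. z \<in> ball w 1 \<Longrightarrow> cmod (poly p z) < B"
  shows "cmod (poly (pderiv (pderiv p)) w) \<le> 2 * B"
proof -
  have "cmod ((deriv ^^ 2) (\<lambda>z. poly p z) w) \<le> fact 2 * B / 1 ^ 2"
    by (rule Cauchy_higher_deriv_bound[where y=0])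
       (auto intro!: holomorphic_intros continuous_intros simp: assms dist_norm norm_minus_commute)
  moreover have "(deriv ^^ 2) (\<lambda>z. poly p z) = (\<lambda>z. poly (pderiv (pderiv p)) z)"
    by (simp add: numeral_2_eq_2 deriv_poly_fun)
  ultimately show ?thesis by simp
qed

lemma first_deriv_diff_bound:
  fixes p q :: "complex poly"
  assumes "r > 0" "\<And>z. z \<in> ball w r \<Longrightarrow> cmod (poly p z - poly q z) < e"
  shows "cmod (poly (pderiv p) w - poly (pderiv q) w) \<le> e / r"
proof -
  have "cmod ((deriv ^^ 1) (\<lambda>z. poly (p - q) z) w) \<le> fact 1 * e / r ^ 1"
    by (rule Cauchy_higher_deriv_bound[where y=0])
       (auto intro!: holomorphic_intros continuous_intros simp: assms dist_norm norm_minus_commute)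
  moreover have "(deriv ^^ 1) (\<lambda>z. poly (p - q) z) = (\<lambda>z. poly (pderiv (p - q)) z)"
    using deriv_poly_fun[of "p - q"] by simp
  ultimately show ?thesis by (simp add: pderiv_diff)
qed

theorem lemma7:
  fixes fs :: "nat \<Rightarrow> complex poly" and f :: "complex poly"
  assumes conv: "\<And>K. compact K \<Longrightarrow> uniform_limit K (\<lambda>m z. poly (fs m) z) (\<lambda>z. poly f z) sequentially"
    and simple: "\<And>z. poly f z = 0 \<Longrightarrow> poly (pderiv f) z \<noteq> 0"
    and nonconst: "degree f \<ge> 1"
  shows "\<exists>m0 (\<rho>0::complex). \<forall>m>m0. converging_initial_condition (fs m) \<rho>0"
proof -
  obtain \<rho> where root: "poly f \<rho> = 0"
  proof -
    have "f \<noteq> 0" using nonconst by auto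
    then have "coeff f (degree f) \<noteq> 0" by simp
    then have "\<exists>i \<in> {1..degree f}. coeff f i \<noteq> 0" using nonconst by (intro bexI[of _ "degree f"]) auto
    then obtain z where "(\<Sum>i\<le>degree f. coeff f i * z^i) = 0"
      using fundamental_theorem_of_algebra[of "coeff f" "degree f"] by blast
    then show ?thesis using that by (simp add: poly_altdef)
  qed
  define d where "d = cmod (poly (pderiv f) \<rho>)"
  have d: "d > 0" using simple[OF root] d_def by simp
  define K where "K = cball \<rho> 2"
  have cK: "compact K" by (simp add: K_def)
  obtain M where M: "\<And>z. z \<in> K \<Longrightarrow> cmod (poly f z) \<le> M"
  proof -
    have "bounded ((\<lambda>z. poly f z) ` K)"
      by (intro compact_imp_bounded compact_continuous_image cK continuous_intros)
    then show ?thesis using that unfolding bounded_iff by blast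
  qed
  define a where "a = 2 / d"
  define L where "L = 2 * (\<bar>M\<bar> + 1)"
  define b where "b = min (1/4) (1 / (2 * a * L))"
  define h where "h = a * b * L"
  define ts where "ts = (1 - sqrt (1 - 2 * h)) / (a * L)"
  have a: "a > 0" and L: "L > 0" using d by (auto simp: a_def L_def)
  have b: "b > 0" "b \<le> 1/4" "b \<le> 1 / (2 * a * L)" using a L by (auto simp: b_def)
  have "a * L * b \<le> a * L * (1 / (2 * a * L))"
    using a L b by (intro mult_left_mono) auto
  also have "\<dots> = 1/2" using a L by simp
  finally have h: "h > 0" "h \<le> 1/2" using a L b unfolding h_def
    by (simp_all add: mult.commute mult.left_commute)
  have "1 - sqrt (1 - 2 * h) \<le> 2 * h"
  proof -
    have "1 - 2 * h \<le> sqrt (1 - 2 * h)"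
    proof (rule real_le_rsqrt)
      have "(1 - 2*h) * (1 - 2*h) \<le> (1 - 2*h) * 1" by (rule mult_left_mono) (use h in auto)
      then show "(1 - 2 * h)\<^sup>2 \<le> 1 - 2 * h" by (simp add: power2_eq_square)
    qed
    then show ?thesis by linarith
  qed
  then have "ts \<le> 2 * h / (a * L)" unfolding ts_def using a L
    by (intro divide_right_mono) auto
  also have "\<dots> = 2 * b" using a L by (simp add: h_def field_simps)
  finally have ts: "ts < 1" using b by linarith
  have ev1: "eventually (\<lambda>m. \<forall>z\<in>K. dist (poly (fs m) z) (poly f z) < min 1 (min d (b * d / 2))) sequentially"
  proof -
    have "min 1 (min d (b * d / 2)) > 0" using d b by simp
    then show ?thesis using conv[OF cK] unfolding uniform_limit_iff by blast
  qed
  then obtain m0 where m0: "\<And>m. m \<ge> m0 \<Longrightarrow> \<forall>z\<in>K. dist (poly (fs m) z) (poly f z) < min 1 (min d (b * d / 2))"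
    by (auto simp: eventually_sequentially)
  have "converging_initial_condition (fs m) \<rho>" if "m > m0" for m
  proof -
    have cl: "\<And>z. z \<in> K \<Longrightarrow> cmod (poly (fs m) z - poly f z) < min 1 (min d (b * d / 2))"
      using m0[of m] that by (auto simp: dist_norm)
    have rK: "\<rho> \<in> K" by (simp add: K_def)
    have bnd: "cmod (poly (fs m) z) < \<bar>M\<bar> + 1" if "z \<in> K" for z
    proof -
      have "cmod (poly (fs m) z) \<le> cmod (poly (fs m) z - poly f z) + cmod (poly f z)"
        by (metis diff_add_cancel norm_triangle_ineq)
      with cl[OF that] M[OF that] show ?thesis by linarith
    qed
    have d1: "cmod (poly (pderiv (fs m)) \<rho> - poly (pderiv f) \<rho>) \<le> d / 2"
    proof (rule first_deriv_diff_bound[where r=2 and e=d])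
      fix z assume "z \<in> ball \<rho> 2"
      then have "z \<in> K" by (auto simp: K_def)
      from cl[OF this] show "cmod (poly (fs m) z - poly f z) < d" by linarith
    qed simp
    have "d \<le> cmod (poly (pderiv (fs m)) \<rho>) + cmod (poly (pderiv (fs m)) \<rho> - poly (pderiv f) \<rho>)"
      unfolding d_def by (metis add.commute diff_add_cancel norm_triangle_ineq norm_minus_commute)
    then have dm: "cmod (poly (pderiv (fs m)) \<rho>) \<ge> d / 2" using d1 by linarith
    then have nz: "poly (pderiv (fs m)) \<rho> \<noteq> 0" using d by auto
    have ia: "cmod (inverse (poly (pderiv (fs m)) \<rho>)) \<le> a"
    proof -
      have "cmod (inverse (poly (pderiv (fs m)) \<rho>)) = inverse (cmod (poly (pderiv (fs m)) \<rho>))"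
        by (simp add: norm_inverse)
      also have "\<dots> \<le> inverse (d / 2)" using dm d by (intro le_imp_inverse_le) auto
      also have "\<dots> = a" by (simp add: a_def)
      finally show ?thesis .
    qed
    have fr: "cmod (poly (fs m) \<rho>) \<le> b * d / 2"
      using cl[OF rK] root by simp
    have ib: "cmod (inverse (poly (pderiv (fs m)) \<rho>) * poly (fs m) \<rho>) \<le> b"
    proof -
      have "cmod (inverse (poly (pderiv (fs m)) \<rho>) * poly (fs m) \<rho>)
          = cmod (poly (fs m) \<rho>) / cmod (poly (pderiv (fs m)) \<rho>)"
        by (simp add: norm_mult norm_inverse divide_inverse)
      also have "\<dots> \<le> (b * d / 2) / (d / 2)"
        using fr dm d b by (intro frac_le) auto
      also have "\<dots> = b" using d by simp
      finally show ?thesis .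
    qed
    have lip: "\<forall>z1\<in>ball \<rho> 1. \<forall>z2\<in>ball \<rho> 1. cmod (poly (pderiv (fs m)) z1 - poly (pderiv (fs m)) z2) \<le> L * cmod (z1 - z2)"
    proof (intro ballI)
      fix z1 z2 assume z: "z1 \<in> ball \<rho> 1" "z2 \<in> ball \<rho> 1"
      show "cmod (poly (pderiv (fs m)) z1 - poly (pderiv (fs m)) z2) \<le> L * cmod (z1 - z2)"
      proof (rule field_differentiable_bound[OF convex_ball _ _ z])
        fix w assume w: "w \<in> ball \<rho> 1"
        show "((\<lambda>z. poly (pderiv (fs m)) z) has_field_derivative poly (pderiv (pderiv (fs m))) w) (at w within ball \<rho> 1)"
          by (rule DERIV_subset[OF poly_DERIV]) auto
        have "\<And>z. z \<in> ball w 1 \<Longrightarrow> cmod (poly (fs m) z) < \<bar>M\<bar> + 1"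
        proof -
          fix z assume "z \<in> ball w 1"
          then have "z \<in> K" using w unfolding K_def
            by (smt (verit, ccfv_SIG) dist_triangle mem_ball mem_cball)
          then show "cmod (poly (fs m) z) < \<bar>M\<bar> + 1" by (rule bnd)
        qed
        then show "cmod (poly (pderiv (pderiv (fs m))) w) \<le> L"
          unfolding L_def by (rule second_deriv_bound)
      qed
    qed
    have "cball \<rho> ts \<subseteq> ball \<rho> 1" using ts by auto
    then show ?thesis unfolding converging_initial_condition_def
      using lip nz ia ib h L
      by (intro exI[of _ "ball \<rho> 1"] exI[of _ L] exI[of _ a] exI[of _ b] exI[of _ h] exI[of _ ts])
         (auto simp: h_def ts_def)
  qed
  then show ?thesis by blast
qed

end
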